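(* Let $(\alpha_n)_{n\ge0}$ be complex numbers with $|\alpha_n|<1$, let $n,r,s$ be nonnegative integers, and suppose $\alpha_i\neq0$ for $0\le i\le n+r$. If $n\ge1$, then \[ \eta_{n,r,s}=-\left(\overline{\alpha_{s-1}}\right)^{-1}\sum_p\mathrm{wt}_S(p), \] where the sum is over all Schröder paths from $(0,r)$ to $(n,s)$ that neither start nor end with a vertical down-step $(0,-1)$. If $n=0$, then \[ \eta_{0,r,s}=\begin{cases}-\dfrac{1}{\overline{\alpha_{r-1}}}&\text{if } s=r,\\[2pt] \dfrac{1-|\alpha_{r-1}|^2}{\overline{\alpha_{r-1}}}&\text{if } s=r-1,\\[2pt] 0&\text{otherwise.}\end{cases} \]
   Context: For a polynomial $f(z)=\sum_{k=0}^n a_kz^k$ of degree $n$, write $\overline{f}(z)=\sum_k\overline{a_k}z^k$ and $f^*(z)=z^n\overline{f}(1/z)$. Define monic $\Phi_n$ by $\Phi_0=1$, $\Phi_{n+1}(z)=z\Phi_n(z)-\overline{\alpha_n}\Phi_n^*(z)$, where $\Phi_n^*(z)=z^n\overline{\Phi_n}(1/z)$. Set $\alpha_{-1}=-1$. Under the hypothesis, the polynomials $\Phi_0^*,\dots,\Phi_{n+r}^*$ have degrees $0,\dots,n+r$, so there are unique coefficients $c_{n,r,s}$ with $z^n\Phi_r(z)=\sum_{s=0}^{n+r}c_{n,r,s}\Phi_s^*(z)$; set $c_{n,r,s}=0$ for $s>n+r$ and $\eta_{n,r,s}=\overline{c_{n,r,s}}$. A Schröder path is a lattice path in $\mathbb{Z}\times\mathbb{Z}_{\ge0}$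 with steps $(1,1)$, $(1,0)$, $(0,-1)$. $\mathrm{wt}_S(p)$ is the product of step weights: $(a,b)\to(a+1,b+1)$ weight $1$; $(a,b)\to(a+1,b)$ weight $-\overline{\alpha_{b-1}}/\overline{\alpha_b}$; $(a,b)\to(a,b-1)$ weight $\frac{\overline{\alpha_{b-2}}}{\overline{\alpha_{b-1}}}(1-|\alpha_{b-1}|^2)$. *)

theory Defs
  imports Complex_Main "HOL-Computational_Algebra.Polynomial"
begin

definition al :: "(nat \<Rightarrow> complex) \<Rightarrow> int \<Rightarrow> complex" where
  "al a k = (if k = -1 then -1 else a (nat k))"

text \<open>f^*(z) = z^(deg f) * conj-coefficient f (1/z)\<close>
definition pstar :: "complex poly \<Rightarrow> complex poly" where
  "pstar f = (\<Sum>k\<le>degree f. monom (cnj (coeff f (degree f - k))) k)"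

primrec Phi :: "(nat \<Rightarrow> complex) \<Rightarrow> nat \<Rightarrow> complex poly" where
  "Phi a 0 = 1"
| "Phi a (Suc n) = [:0, 1:] * Phi a n - smult (cnj (a n)) (pstar (Phi a n))"

definition Phistar :: "(nat \<Rightarrow> complex) \<Rightarrow> nat \<Rightarrow> complex poly" where
  "Phistar a n = pstar (Phi a n)"

definition cc :: "(nat \<Rightarrow> complex) \<Rightarrow> nat \<Rightarrow> nat \<Rightarrow> nat \<Rightarrow> complex" where
  "cc a n r = (THE c. (\<forall>s>n+r. c s = 0) \<and>
      monom 1 n * Phi a r = (\<Sum>s\<le>n+r. smult (c s) (Phistar a s)))"

definition eta :: "(nat \<Rightarrow> complex) \<Rightarrow> nat \<Rightarrow> nat \<Rightarrow> nat \<Rightarrow> complex" where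
  "eta a n r s = cnj (cc a n r s)"

text \<open>Schroeder paths as step sequences: Up = (1,1), Flat = (1,0), Down = (0,-1).\<close>
datatype step = Up | Flat | Down

fun valid_path :: "int \<Rightarrow> step list \<Rightarrow> bool" where
  "valid_path b [] = True"
| "valid_path b (Up # p) = valid_path (b + 1) p"
| "valid_path b (Flat # p) = valid_path b p"
| "valid_path b (Down # p) = (b \<ge> 1 \<and> valid_path (b - 1) p)"

fun end_height :: "int \<Rightarrow> step list \<Rightarrow> int" where
  "end_height b [] = b"
| "end_height b (Up # p) = end_height (b + 1) p"
| "end_height b (Flat # p) = end_height b p"
| "end_height b (Down # p) = end_height (b - 1) p"

definition x_length :: "step list \<Rightarrow> nat" where
  "x_length p = length (filter (\<lambda>t. t \<noteq> Down) p)"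

fun wtS :: "(nat \<Rightarrow> complex) \<Rightarrow> int \<Rightarrow> step list \<Rightarrow> complex" where
  "wtS a b [] = 1"
| "wtS a b (Up # p) = wtS a (b + 1) p"
| "wtS a b (Flat # p) = (- cnj (al a (b - 1)) / cnj (al a b)) * wtS a b p"
| "wtS a b (Down # p) =
     (cnj (al a (b - 2)) / cnj (al a (b - 1)) * (1 - (cmod (al a (b - 1)))\<^sup>2)) * wtS a (b - 1) p"

definition schroeder_paths :: "nat \<Rightarrow> nat \<Rightarrow> nat \<Rightarrow> step list set" where
  "schroeder_paths n r s = {p. valid_path (int r) p \<and> x_length p = n \<and>
      end_height (int r) p = int s \<and> (p \<noteq> [] \<longrightarrow> hd p \<noteq> Down \<and> last p \<noteq> Down)}"

end

theory Submission
  imports Defs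
begin


lemma coeff_pstar: "coeff (pstar f) k = (if k \<le> degree f then cnj (coeff f (degree f - k)) else 0)"
  unfolding pstar_def coeff_sum by (auto simp: coeff_monom)

lemma Phi_deg: "degree (Phi a s) \<le> s \<and> coeff (Phi a s) s = 1"
proof (induction s)
  case 0 then show ?case by simp
next
  case (Suc s)
  have dq: "degree (pstar (Phi a s)) \<le> s"
    by (rule degree_le) (auto simp: coeff_pstar dest: order.trans[OF _ conjunct1[OF Suc.IH]])
  have "[:0, 1:] * Phi a s = pCons 0 (Phi a s)" by simp
  then have e: "Phi a (Suc s) = pCons 0 (Phi a s) - smult (cnj (a s)) (pstar (Phi a s))" by simp
  have "degree (Phi a (Suc s)) \<le> Suc s" unfolding e
    apply (rule degree_diff_le)
    using Suc.IH apply (auto simp: degree_pCons_eq_if)[1]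
    using dq degree_smult_le order.trans le_SucI by blast
  moreover have "coeff (Phi a (Suc s)) (Suc s) = 1" unfolding e
    using Suc.IH dq by (simp add: coeff_eq_0)
  ultimately show ?case by blast
qed

lemma Phi_degree: "degree (Phi a s) = s"
  using Phi_deg[of a s] le_degree[of "Phi a s" s] by auto

lemma Phistar_0: "Phistar a 0 = 1"
  by (simp add: Phistar_def pstar_def)

lemma Phistar_Suc: "Phistar a (Suc s) = Phistar a s - smult (a s) (pCons 0 (Phi a s))"
proof (rule poly_eqI)
  fix k
  have e: "Phi a (Suc s) = pCons 0 (Phi a s) - smult (cnj (a s)) (pstar (Phi a s))" by simp
  have hi: "\<And>j. j > s \<Longrightarrow> coeff (Phi a s) j = 0"
    using Phi_degree coeff_eq_0 by metis
  have c1: "coeff (Phistar a (Suc s)) k = (if k \<le> Suc s then cnj (coeff (Phi a (Suc s)) (Suc s - k)) else 0)"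
    unfolding Phistar_def coeff_pstar Phi_degree ..
  have c2: "\<And>j. coeff (Phi a (Suc s)) j = (if j = 0 then 0 else coeff (Phi a s) (j - 1))
      - cnj (a s) * (if j \<le> s then cnj (coeff (Phi a s) (s - j)) else 0)"
    by (subst e) (simp add: coeff_pstar Phi_degree coeff_pCons' del: Phi.simps)
  show "coeff (Phistar a (Suc s)) k = coeff (Phistar a s - smult (a s) (pCons 0 (Phi a s))) k"
    unfolding c1 c2
    by (cases k) (auto simp: Suc_diff_le hi Phistar_def coeff_pstar Phi_degree)
qed

lemma Phistar_deg: "degree (Phistar a s) \<le> s"
proof (induction s)
  case 0 then show ?case by (simp add: Phistar_0)
next
  case (Suc s)
  show ?case unfolding Phistar_Suc
    apply (rule degree_diff_le)
    using Suc.IH apply simp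
    using Phi_degree[of a s] degree_smult_le
    by (metis degree_pCons_eq_if le_SucI le_refl order.trans zero_le)
qed

lemma Phistar_lead: "coeff (Phistar a (Suc s)) (Suc s) = - a s"
  unfolding Phistar_Suc using Phistar_deg[of a s] Phi_deg[of a s]
  by (simp add: coeff_eq_0)



definition wF :: "(nat \<Rightarrow> complex) \<Rightarrow> nat \<Rightarrow> complex" where
  "wF a b = - cnj (al a (int b - 1)) / cnj (al a (int b))"
definition wD :: "(nat \<Rightarrow> complex) \<Rightarrow> nat \<Rightarrow> complex" where
  "wD a b = cnj (al a (int b - 2)) / cnj (al a (int b - 1)) * (1 - (cmod (al a (int b - 1)))\<^sup>2)"

fun Vt :: "(nat \<Rightarrow> complex) \<Rightarrow> nat \<Rightarrow> nat \<Rightarrow> nat \<Rightarrow> complex" where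
  "Vt a 0 b s = (if b = s then 1 else 0)"
| "Vt a (Suc m) 0 s = Vt a m 1 s + wF a 0 * Vt a m 0 s"
| "Vt a (Suc m) (Suc b) s = (Vt a m (Suc (Suc b)) s + wF a (Suc b) * Vt a m (Suc b) s)
     + wD a (Suc b) * Vt a (Suc m) b s"

definition Vh :: "(nat \<Rightarrow> complex) \<Rightarrow> nat \<Rightarrow> nat \<Rightarrow> nat \<Rightarrow> complex" where
  "Vh a m b s = Vt a m (Suc b) s + wF a b * Vt a m b s"

lemma Vt_Suc: "Vt a (Suc m) b s = Vh a m b s + (if b = 0 then 0 else wD a b * Vt a (Suc m) (b - 1) s)"
  by (cases b) (auto simp: Vh_def)

lemma Vt_zero: "s > b + m \<Longrightarrow> Vt a m b s = 0"
  by (induction a m b s rule: Vt.induct) auto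

lemma Vh_zero: "s > Suc (b + m) \<Longrightarrow> Vh a m b s = 0"
  by (simp add: Vh_def Vt_zero)

definition Ptot :: "nat \<Rightarrow> nat \<Rightarrow> nat \<Rightarrow> step list set" where
  "Ptot b n s = {p. valid_path (int b) p \<and> x_length p = n \<and>
      end_height (int b) p = int s \<and> (p \<noteq> [] \<longrightarrow> last p \<noteq> Down)}"

lemma xl_simps[simp]: "x_length [] = 0" "x_length (Up # p) = Suc (x_length p)"
  "x_length (Flat # p) = Suc (x_length p)" "x_length (Down # p) = x_length p"
  by (auto simp: x_length_def)

lemma xl0_last: "x_length p = 0 \<Longrightarrow> p \<noteq> [] \<Longrightarrow> last p = Down"
proof -
  assume "x_length p = 0" "p \<noteq> []"
  then have "\<forall>x\<in>set p. x = Down" by (auto simp: x_length_def filter_empty_conv)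
  then show ?thesis using \<open>p \<noteq> []\<close> by auto
qed

lemma Ptot_0: "Ptot b 0 s = (if b = s then {[]} else {})"
proof -
  have "p \<in> Ptot b 0 s \<longleftrightarrow> p = [] \<and> b = s" for p
    by (cases "p = []") (use xl0_last[of p] in \<open>auto simp: Ptot_def\<close>)
  then show ?thesis by auto
qed

lemma Ptot_Suc: "Ptot b (Suc n) s = Cons Up ` Ptot (Suc b) n s \<union> Cons Flat ` Ptot b n s \<union>
   (if b = 0 then {} else Cons Down ` Ptot (b - 1) (Suc n) s)"
proof (intro set_eqI iffI)
  fix p assume p: "p \<in> Ptot b (Suc n) s"
  then obtain x q where pq: "p = x # q" unfolding Ptot_def by (cases p) auto
  show "p \<in> Cons Up ` Ptot (Suc b) n s \<union> Cons Flat ` Ptot b n s \<union>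
   (if b = 0 then {} else Cons Down ` Ptot (b - 1) (Suc n) s)"
  proof (cases x)
    case Up then show ?thesis using p pq by (auto simp: Ptot_def add.commute split: if_splits)
  next
    case Flat then show ?thesis using p pq by (auto simp: Ptot_def split: if_splits)
  next
    case Down
    then have "b \<noteq> 0" using p pq by (auto simp: Ptot_def)
    then have "int b - 1 = int (b - 1)" by simp
    then show ?thesis using p pq Down \<open>b \<noteq> 0\<close> by (auto simp: Ptot_def split: if_splits)
  qed
next
  fix p assume "p \<in> Cons Up ` Ptot (Suc b) n s \<union> Cons Flat ` Ptot b n s \<union>
   (if b = 0 then {} else Cons Down ` Ptot (b - 1) (Suc n) s)"
  then show "p \<in> Ptot b (Suc n) s"
  proof (elim UnE)
    assume "p \<in> Cons Up ` Ptot (Suc b) n s" then show ?thesis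
      by (auto simp: Ptot_def add.commute split: if_splits)
  next
    assume "p \<in> Cons Flat ` Ptot b n s" then show ?thesis
      by (auto simp: Ptot_def split: if_splits)
  next
    assume h: "p \<in> (if b = 0 then {} else Cons Down ` Ptot (b - 1) (Suc n) s)"
    then have "b \<noteq> 0" by (auto split: if_splits)
    then have "int b - 1 = int (b - 1)" by simp
    then show ?thesis using h \<open>b \<noteq> 0\<close> by (auto simp: Ptot_def split: if_splits)
  qed
qed

lemma wtS_Flat': "wtS a (int b) (Flat # p) = wF a b * wtS a (int b) p"
  by (simp add: wF_def)
lemma wtS_Down': "b \<noteq> 0 \<Longrightarrow> wtS a (int b) (Down # p) = wD a b * wtS a (int (b - 1)) p"
  by (simp add: wD_def of_nat_diff)
lemma wtS_Up': "wtS a (int b) (Up # p) = wtS a (int (Suc b)) p"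
  by (simp add: add.commute)

lemma wtS_0: "wtS a 0 (Up # p) = wtS a 1 p" "wtS a 0 (Flat # p) = wF a 0 * wtS a 0 p"
  by (simp_all add: wF_def)

lemma Ptot_sum: "finite (Ptot b n s) \<and> (\<Sum>p\<in>Ptot b n s. wtS a (int b) p) = Vt a n b s"
proof (induction n arbitrary: b)
  case 0 then show ?case by (simp add: Ptot_0)
next
  case (Suc n)
  note IHn = Suc.IH
  show ?case
  proof (induction b)
    case 0
    have d: "Cons Up ` Ptot (Suc 0) n s \<inter> Cons Flat ` Ptot 0 n s = {}" by auto
    have "(\<Sum>p\<in>Ptot 0 (Suc n) s. wtS a (int 0) p) =
        (\<Sum>p\<in>Cons Up ` Ptot (Suc 0) n s. wtS a 0 p) + (\<Sum>p\<in>Cons Flat ` Ptot 0 n s. wtS a 0 p)"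
      unfolding Ptot_Suc[of 0 n s] using Suc.IH d by (simp add: sum.union_disjoint)
    also have "\<dots> = Vt a n 1 s + wF a 0 * Vt a n 0 s"
      using Suc.IH[of 1] Suc.IH[of 0]
      by (simp add: sum.reindex sum_distrib_left[symmetric] wtS_0 del: wtS.simps)
    moreover have "finite (Ptot 0 (Suc n) s)" unfolding Ptot_Suc[of 0 n s] using Suc.IH by simp
    ultimately show ?case by simp
  next
    case (Suc b)
    have d1: "Cons Up ` Ptot (Suc (Suc b)) n s \<inter> Cons Flat ` Ptot (Suc b) n s = {}" by auto
    have d2: "(Cons Up ` Ptot (Suc (Suc b)) n s \<union> Cons Flat ` Ptot (Suc b) n s) \<inter>
        Cons Down ` Ptot b (Suc n) s = {}" by auto
    have f: "finite (Ptot (Suc b) (Suc n) s)" using IHn Suc.IH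
      unfolding Ptot_Suc[of "Suc b" n s] by simp
    have e1: "int (Suc b) - 1 = int b" by simp
    have "(\<Sum>p\<in>Ptot (Suc b) (Suc n) s. wtS a (int (Suc b)) p) =
        (\<Sum>p\<in>Cons Up ` Ptot (Suc (Suc b)) n s. wtS a (int (Suc b)) p)
        + (\<Sum>p\<in>Cons Flat ` Ptot (Suc b) n s. wtS a (int (Suc b)) p)
        + (\<Sum>p\<in>Cons Down ` Ptot b (Suc n) s. wtS a (int (Suc b)) p)"
      unfolding Ptot_Suc[of "Suc b" n s] using IHn Suc.IH d1 d2 by (simp add: sum.union_disjoint)
    also have "\<dots> = (Vt a n (Suc (Suc b)) s + wF a (Suc b) * Vt a n (Suc b) s)
     + wD a (Suc b) * Vt a (Suc n) b s"
      using Suc.IH IHn[of "Suc (Suc b)"] IHn[of "Suc b"]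
      by (simp add: sum.reindex sum_distrib_left[symmetric] wtS_Flat' wtS_Down' wtS_Up' del: wtS.simps of_nat_Suc)
    finally show ?case using f by simp
  qed
qed

lemma schroeder_Suc: "schroeder_paths (Suc m) r s = Cons Up ` Ptot (Suc r) m s \<union> Cons Flat ` Ptot r m s"
proof -
  have "schroeder_paths (Suc m) r s = {p \<in> Ptot r (Suc m) s. hd p \<noteq> Down}"
    unfolding schroeder_paths_def Ptot_def by auto
  also have "\<dots> = Cons Up ` Ptot (Suc r) m s \<union> Cons Flat ` Ptot r m s"
    unfolding Ptot_Suc[of r m s] by auto
  finally show ?thesis .
qed

lemma schroeder_sum: "(\<Sum>p\<in>schroeder_paths (Suc m) r s. wtS a (int r) p) = Vh a m r s"
proof -
  have d: "Cons Up ` Ptot (Suc r) m s \<inter> Cons Flat ` Ptot r m s = {}" by auto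
  show ?thesis unfolding schroeder_Suc using Ptot_sum[of "Suc r" m s a] Ptot_sum[of r m s a] d
    by (simp add: sum.union_disjoint sum.reindex sum_distrib_left[symmetric] wtS_Flat' wtS_Up' Vh_def del: wtS.simps of_nat_Suc)
qed



abbreviation AA :: "(nat \<Rightarrow> complex) \<Rightarrow> nat \<Rightarrow> complex" where
  "AA a s \<equiv> al a (int s - 1)"

lemma AA_0: "AA a 0 = -1" by (simp add: al_def)
lemma AA_Suc: "AA a (Suc s) = a s" by (simp add: al_def)
lemma al_nat: "al a (int b) = a b" by (simp add: al_def)
lemma al_m2: "al a (int (Suc b) - 2) = AA a b"
  by (simp add: al_def algebra_simps)

lemma smult_sum_right: "smult c (sum f S) = (\<Sum>i\<in>S. smult c (f i))"
  by (induction S rule: infinite_finite_induct) (auto simp: smult_add_right)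

lemma monom_Suc_mult: "monom 1 (Suc m) * p = monom 1 m * pCons 0 p"
  by (simp add: monom_Suc)

lemma zP: "a j \<noteq> 0 \<Longrightarrow> pCons 0 (Phi a j) = smult (1 / a j) (Phistar a j - Phistar a (Suc j))"
  by (simp add: Phistar_Suc)

lemma QB: "Phistar a (Suc t) = smult (1 - complex_of_real ((cmod (a t))\<^sup>2)) (Phistar a t)
   - smult (a t) (Phi a (Suc t))"
proof -
  have e: "Phi a (Suc t) = pCons 0 (Phi a t) - smult (cnj (a t)) (Phistar a t)" by (simp add: Phistar_def)
  show ?thesis unfolding e Phistar_Suc complex_norm_square
    by (simp add: smult_diff_right smult_diff_left algebra_simps)
qed

lemma sum_smult_diff: "(\<Sum>s\<in>S. smult (f s) (Q s :: complex poly)) - (\<Sum>s\<in>S. smult (g s) (Q s)) =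
   (\<Sum>s\<in>S. smult (f s - g s) (Q s))"
  by (simp add: sum_subtractf smult_diff_left)

lemma sum_smult_add: "(\<Sum>s\<in>S. smult (f s) (Q s :: complex poly)) + (\<Sum>s\<in>S. smult (g s) (Q s)) =
   (\<Sum>s\<in>S. smult (f s + g s) (Q s))"
  by (simp add: sum.distrib smult_add_left)

lemma H_from_T:
  assumes ab: "a b \<noteq> 0"
    and T1: "monom 1 m * Phistar a b = (\<Sum>s\<le>K. smult (AA a b / AA a s * cnj (Vt a m b s)) (Phistar a s))"
    and T2: "monom 1 m * Phistar a (Suc b) =
       (\<Sum>s\<le>K. smult (AA a (Suc b) / AA a s * cnj (Vt a m (Suc b) s)) (Phistar a s))"
  shows "monom 1 (Suc m) * Phi a b = (\<Sum>s\<le>K. smult (- cnj (Vh a m b s) / AA a s) (Phistar a s))"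
proof -
  have "monom 1 (Suc m) * Phi a b = smult (1 / a b) (monom 1 m * Phistar a b - monom 1 m * Phistar a (Suc b))"
    unfolding monom_Suc_mult zP[of a b, OF ab] by (simp add: algebra_simps)
  also have "\<dots> = (\<Sum>s\<le>K. smult (1 / a b * (AA a b / AA a s * cnj (Vt a m b s)
        - AA a (Suc b) / AA a s * cnj (Vt a m (Suc b) s))) (Phistar a s))"
    unfolding T1 T2 sum_smult_diff smult_sum_right by simp
  also have "\<dots> = (\<Sum>s\<le>K. smult (- cnj (Vh a m b s) / AA a s) (Phistar a s))"
  proof (rule sum.cong[OF refl])
    fix s
    have "1 / a b * (AA a b / AA a s * cnj (Vt a m b s)
        - AA a (Suc b) / AA a s * cnj (Vt a m (Suc b) s)) = - cnj (Vh a m b s) / AA a s"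
    proof (cases "AA a s = 0")
      case False
      have w: "cnj (wF a b) = - AA a b / a b" by (simp add: wF_def al_nat)
      show ?thesis using ab False unfolding AA_Suc Vh_def complex_cnj_add complex_cnj_mult w
        by (simp add: field_simps)
    qed simp
    then show "smult (1 / a b * (AA a b / AA a s * cnj (Vt a m b s)
        - AA a (Suc b) / AA a s * cnj (Vt a m (Suc b) s))) (Phistar a s) =
      smult (- cnj (Vh a m b s) / AA a s) (Phistar a s)" by simp
  qed
  finally show ?thesis .
qed


lemma AA_nz: "\<forall>i\<le>N. a i \<noteq> 0 \<Longrightarrow> b \<le> Suc N \<Longrightarrow> AA a b \<noteq> 0"
  by (cases b) (auto simp: al_def)

lemma cnj_wD: "cnj (wD a (Suc j)) = AA a j / a j * (1 - complex_of_real ((cmod (a j))\<^sup>2))"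
  by (simp add: wD_def al_m2 AA_Suc al_nat)

lemma T_all:
  assumes nz: "\<forall>i\<le>N. a i \<noteq> 0"
  shows "b + m \<le> Suc N \<Longrightarrow> b + m \<le> K \<Longrightarrow>
    monom 1 m * Phistar a b = (\<Sum>s\<le>K. smult (AA a b / AA a s * cnj (Vt a m b s)) (Phistar a s))"
proof (induction m arbitrary: b K)
  case 0
  have "AA a b \<noteq> 0" using AA_nz[OF nz] 0 by simp
  then have "(\<Sum>s\<le>K. smult (AA a b / AA a s * cnj (Vt a 0 b s)) (Phistar a s))
      = (\<Sum>s\<le>K. if b = s then Phistar a s else 0)"
    by (intro sum.cong) auto
  also have "\<dots> = Phistar a b" using 0 by simp
  finally show ?case by simp
next
  case (Suc m)
  note IHm = Suc.IH
  from Suc.prems show ?case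
  proof (induction b arbitrary: K)
    case 0
    have H: "monom 1 (Suc m) * Phi a 0 = (\<Sum>s\<le>K. smult (- cnj (Vh a m 0 s) / AA a s) (Phistar a s))"
      by (rule H_from_T) (use nz IHm[of 0 K] IHm[of 1 K] 0 in auto)
    have "monom 1 (Suc m) * Phistar a 0 = monom 1 (Suc m) * Phi a 0"
      by (simp add: Phistar_0)
    also have "\<dots> = (\<Sum>s\<le>K. smult (AA a 0 / AA a s * cnj (Vt a (Suc m) 0 s)) (Phistar a s))"
      unfolding H by (simp add: Vt_Suc al_def)
    finally show ?case .
  next
    case (Suc j)
    have aj: "a j \<noteq> 0" "a (Suc j) \<noteq> 0" using nz Suc.prems by auto
    have H: "monom 1 (Suc m) * Phi a (Suc j) =
        (\<Sum>s\<le>K. smult (- cnj (Vh a m (Suc j) s) / AA a s) (Phistar a s))"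
      by (rule H_from_T) (use aj IHm[of "Suc j" K] IHm[of "Suc (Suc j)" K] Suc.prems in auto)
    have T: "monom 1 (Suc m) * Phistar a j =
        (\<Sum>s\<le>K. smult (AA a j / AA a s * cnj (Vt a (Suc m) j s)) (Phistar a s))"
      using Suc.IH[of K] Suc.prems by auto
    have "monom 1 (Suc m) * Phistar a (Suc j) =
        smult (1 - complex_of_real ((cmod (a j))\<^sup>2)) (monom 1 (Suc m) * Phistar a j)
        - smult (a j) (monom 1 (Suc m) * Phi a (Suc j))"
      by (subst QB) (simp add: algebra_simps)
    also have "\<dots> = (\<Sum>s\<le>K. smult ((1 - complex_of_real ((cmod (a j))\<^sup>2)) * (AA a j / AA a s * cnj (Vt a (Suc m) j s))
        - a j * (- cnj (Vh a m (Suc j) s) / AA a s)) (Phistar a s))"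
      unfolding H T smult_sum_right smult_smult sum_smult_diff by (rule refl)
    also have "\<dots> = (\<Sum>s\<le>K. smult (AA a (Suc j) / AA a s * cnj (Vt a (Suc m) (Suc j) s)) (Phistar a s))"
    proof (rule sum.cong[OF refl])
      fix s
      have "(1 - complex_of_real ((cmod (a j))\<^sup>2)) * (AA a j / AA a s * cnj (Vt a (Suc m) j s))
        - a j * (- cnj (Vh a m (Suc j) s) / AA a s) = AA a (Suc j) / AA a s * cnj (Vt a (Suc m) (Suc j) s)"
        unfolding Vt_Suc[of a m "Suc j"] using aj(1)
        by (cases "AA a s = 0") (simp_all add: cnj_wD AA_Suc al_nat field_simps)
      then show "smult ((1 - complex_of_real ((cmod (a j))\<^sup>2)) * (AA a j / AA a s * cnj (Vt a (Suc m) j s))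
        - a j * (- cnj (Vh a m (Suc j) s) / AA a s)) (Phistar a s) =
        smult (AA a (Suc j) / AA a s * cnj (Vt a (Suc m) (Suc j) s)) (Phistar a s)" by simp
    qed
    finally show ?case .
  qed
qed


lemma sum_delta_smult: "finite S \<Longrightarrow> k \<in> S \<Longrightarrow>
  (\<Sum>s\<in>S. smult (if s = k then x else 0) (Q s :: complex poly)) = smult x (Q k)"
proof -
  assume "finite S" "k \<in> S"
  have "(\<Sum>s\<in>S. smult (if s = k then x else 0) (Q s)) = (\<Sum>s\<in>S. if s = k then smult x (Q s) else 0)"
    by (intro sum.cong) auto
  also have "\<dots> = smult x (Q k)" using \<open>finite S\<close> \<open>k \<in> S\<close> by simp
  finally show ?thesis .
qed

lemma uniq:
  assumes "\<forall>s\<le>N. degree (Q s) \<le> s \<and> coeff (Q s) s \<noteq> (0::complex)"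
    and "(\<Sum>s\<le>N. smult (e s) (Q s)) = 0"
  shows "\<forall>s\<le>N. e s = 0"
  using assms
proof (induction N)
  case 0
  then have "Q 0 \<noteq> 0" by auto
  then show ?case using 0 by simp
next
  case (Suc N)
  have c0: "(\<Sum>s\<le>N. e s * coeff (Q s) (Suc N)) = 0"
  proof (intro sum.neutral ballI)
    fix s assume "s \<in> {..N}"
    then have "degree (Q s) < Suc N" using Suc.prems(1)
      by (meson atMost_iff le_SucI le_imp_less_Suc order.trans)
    then show "e s * coeff (Q s) (Suc N) = 0" by (simp add: coeff_eq_0)
  qed
  have "coeff (\<Sum>s\<le>Suc N. smult (e s) (Q s)) (Suc N) = e (Suc N) * coeff (Q (Suc N)) (Suc N)"
    unfolding coeff_sum using c0 by simp
  moreover have "coeff (\<Sum>s\<le>Suc N. smult (e s) (Q s)) (Suc N) = 0"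
    unfolding Suc.prems(2) by simp
  ultimately have "e (Suc N) * coeff (Q (Suc N)) (Suc N) = 0" by simp
  then have "e (Suc N) = 0" using Suc.prems(1) by auto
  then have "(\<Sum>s\<le>N. smult (e s) (Q s)) = 0" using Suc.prems(2) by simp
  then have "\<forall>s\<le>N. e s = 0" using Suc.IH Suc.prems(1) by simp
  then show ?case using \<open>e (Suc N) = 0\<close> le_Suc_eq by auto
qed

lemma Phistar_good: "\<forall>i<N. a i \<noteq> 0 \<Longrightarrow> s \<le> N \<Longrightarrow>
    degree (Phistar a s) \<le> s \<and> coeff (Phistar a s) s \<noteq> 0"
  using Phistar_deg[of a s] by (cases s) (auto simp: Phistar_0 Phistar_lead)

lemma cc_eq:
  assumes nz: "\<forall>i<n+r. a i \<noteq> 0"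
    and z: "\<forall>s>n+r. c s = 0"
    and rep: "monom 1 n * Phi a r = (\<Sum>s\<le>n+r. smult (c s) (Phistar a s))"
  shows "cc a n r = c"
  unfolding cc_def
proof (rule the_equality)
  show "(\<forall>s>n + r. c s = 0) \<and> monom 1 n * Phi a r = (\<Sum>s\<le>n + r. smult (c s) (Phistar a s))"
    using z rep by blast
next
  fix d assume d: "(\<forall>s>n + r. d s = 0) \<and> monom 1 n * Phi a r = (\<Sum>s\<le>n + r. smult (d s) (Phistar a s))"
  have "(\<Sum>s\<le>n+r. smult (d s - c s) (Phistar a s)) = 0"
    using d rep by (simp add: sum_smult_diff[symmetric])
  then have "\<forall>s\<le>n+r. d s - c s = 0"
    by (intro uniq[where Q = "Phistar a"]) (use Phistar_good[OF nz] in auto)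
  then show "d = c" using d z by (metis eq_iff_diff_eq_0 not_le ext)
qed

theorem proposition5p3:
  fixes a :: "nat \<Rightarrow> complex" and n r s :: nat
  assumes "\<forall>k. cmod (a k) < 1"
    and "\<forall>i\<le>n+r. a i \<noteq> 0"
  shows "(n \<ge> 1 \<longrightarrow>
           eta a n r s = - inverse (cnj (al a (int s - 1))) *
             (\<Sum>p\<in>schroeder_paths n r s. wtS a (int r) p))
       \<and> (n = 0 \<longrightarrow>
           eta a 0 r s =
             (if s = r then - 1 / cnj (al a (int r - 1))
              else if int s = int r - 1 then (1 - (cmod (al a (int r - 1)))\<^sup>2) / cnj (al a (int r - 1))
              else 0))"
proof (intro conjI impI)
  assume "n \<ge> 1"
  then obtain m where m: "n = Suc m" by (cases n) auto
  have nz: "\<forall>i\<le>n+r. a i \<noteq> 0" using assms(2) by blast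
  define c where "c s = - cnj (Vh a m r s) / AA a s" for s
  have rep: "monom 1 n * Phi a r = (\<Sum>s\<le>n+r. smult (c s) (Phistar a s))"
  proof -
    have T1: "monom 1 m * Phistar a r = (\<Sum>s\<le>n+r. smult (AA a r / AA a s * cnj (Vt a m r s)) (Phistar a s))"
      by (rule T_all[OF nz]) (simp_all add: m)
    have T2: "monom 1 m * Phistar a (Suc r) =
       (\<Sum>s\<le>n+r. smult (AA a (Suc r) / AA a s * cnj (Vt a m (Suc r) s)) (Phistar a s))"
      by (rule T_all[OF nz]) (simp_all add: m)
    have "a r \<noteq> 0" using nz by simp
    from H_from_T[OF this T1 T2] show ?thesis unfolding m c_def .
  qed
  have z: "\<forall>s>n+r. c s = 0" unfolding c_def m using Vh_zero by auto
  have "cc a n r = c" by (rule cc_eq) (use nz z rep in auto)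
  then show "eta a n r s = - inverse (cnj (al a (int s - 1))) *
             (\<Sum>p\<in>schroeder_paths n r s. wtS a (int r) p)"
    unfolding eta_def m schroeder_sum by (simp add: c_def m divide_inverse)
next
  assume n0: "n = 0"
  have nz: "\<forall>i\<le>r. a i \<noteq> 0" using assms(2) n0 by auto
  show "eta a 0 r s =
             (if s = r then - 1 / cnj (al a (int r - 1))
              else if int s = int r - 1 then (1 - (cmod (al a (int r - 1)))\<^sup>2) / cnj (al a (int r - 1))
              else 0)"
  proof (cases r)
    case 0
    define c :: "nat \<Rightarrow> complex" where "c s = (if s = 0 then 1 else 0)" for s
    have "cc a 0 r = c" by (rule cc_eq) (auto simp: c_def 0 Phistar_0)
    then show ?thesis by (auto simp: eta_def c_def 0 al_def)
  next
    case (Suc t)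
    have at: "a t \<noteq> 0" using nz Suc by auto
    define c :: "nat \<Rightarrow> complex" where
      "c s = (if s = Suc t then - 1 / a t else 0) + (if s = t then (1 - complex_of_real ((cmod (a t))\<^sup>2)) / a t else 0)" for s
    have "Phi a (Suc t) = smult (1 / a t) (smult (1 - complex_of_real ((cmod (a t))\<^sup>2)) (Phistar a t) - Phistar a (Suc t))"
      using at by (simp add: QB[of a t] smult_diff_right)
    also have "\<dots> = (\<Sum>s\<le>Suc t. smult (c s) (Phistar a s))"
      unfolding c_def smult_add_left sum.distrib
      using at by (simp add: sum_delta_smult smult_diff_right diff_divide_distrib)
    finally have rep: "monom 1 0 * Phi a r = (\<Sum>s\<le>0 + r. smult (c s) (Phistar a s))"
      using Suc by simp
    have "cc a 0 r = c" by (rule cc_eq) (use nz rep Suc in \<open>auto simp: c_def\<close>)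
    then show ?thesis using at
      by (auto simp: eta_def c_def Suc al_def)
  qed
qed

end
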